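(* Consider the noisy search problem in the context, and suppose every query is a discrete interval, $S_n\in\mathcal{I}$ for $n=1,\dots,t$, with uniform prior $\pi_i(0)=\delta$. Then the posterior $\pi(t)$ is piecewise constant on at most $2t+1$ intervals: there exist $k\le 2t+1$ pairwise disjoint sets $J_1,\dots,J_k\in\mathcal{I}$ with $\bigcup_u J_u=\{1,\dots,1/\delta\}$ such that $$\pi_i(t)=\sum_{u=1}^{k}\frac{\pi_{J_u}(t)}{|J_u|}\mathbb{1}_{J_u}(i)\quad\text{for all } i.$$
   Context: Search problem: fix $\delta\in(0,1)$ with $N=1/\delta$ an integer. A target index $\theta$ is uniform on $\{1,\dots,N\}$. A noise profile $p:(0,1)\to(0,1/2)$ is continuous and non-decreasing. At each time $n$ a query set $S_n\subseteq\{1,\dots,N\}$ is chosen as a function of past queries/observations and one observes $Y_n=\mathbb{1}(\theta\in S_n)\oplus Z_n$, where conditionally on $S_n$, $Z_n\sim\mathrm{Bern}(p(\delta|S_n|))$, conditionally i.i.d. across time. The posterior is $\pi_i(t)=\mathbb{P}(\theta=i\mid S_1^t,Y_1^t)$, and $\pi_S=\sum_{i\in S}\pi_i$. $\mathcal{I}=\{\{i:a\le i\le b\}:1\le a\le b\le N\}$ is the collection of discrete intervals. *)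

theory Defs
  imports "HOL-Analysis.Analysis"
begin

definition intervals :: "nat \<Rightarrow> nat set set" where
  "intervals N = {{a..b} | a b. 1 \<le> a \<and> a \<le> b \<and> b \<le> N}"

text \<open>Likelihood P(Y = y | theta = i, query S): Y = 1(theta in S) xor Z,
  Z ~ Bern(p(delta |S|)) with delta = 1/N.\<close>
definition lik :: "(real \<Rightarrow> real) \<Rightarrow> nat \<Rightarrow> nat set \<Rightarrow> bool \<Rightarrow> nat \<Rightarrow> real" where
  "lik p N S y i = (if y \<noteq> (i \<in> S) then p (real (card S) / real N)
                    else 1 - p (real (card S) / real N))"

primrec posterior ::
  "(real \<Rightarrow> real) \<Rightarrow> nat \<Rightarrow> (nat \<Rightarrow> nat set) \<Rightarrow> (nat \<Rightarrow> bool) \<Rightarrow> nat \<Rightarrow> nat \<Rightarrow> real" where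
  "posterior p N S Y 0 i = (if i \<in> {1..N} then 1 / real N else 0)"
| "posterior p N S Y (Suc t) i =
     posterior p N S Y t i * lik p N (S (Suc t)) (Y (Suc t)) i /
     (\<Sum>j\<in>{1..N}. posterior p N S Y t j * lik p N (S (Suc t)) (Y (Suc t)) j)"

end

theory Submission
  imports Defs
begin

lemma post_zero:
  "i \<notin> {1..N} \<Longrightarrow> posterior p N S Y t i = 0"
  by (induction t) auto

lemma post_const:
  assumes "i \<in> {1..N}" "i' \<in> {1..N}" "\<forall>s\<in>{1..t}. (i \<in> S s) = (i' \<in> S s)"
  shows "posterior p N S Y t i = posterior p N S Y t i'"
  using assms
proof (induction t)
  case 0
  then show ?case by simp
next
  case (Suc t)
  have "posterior p N S Y t i = posterior p N S Y t i'" using Suc by auto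
  moreover have "lik p N (S (Suc t)) (Y (Suc t)) i = lik p N (S (Suc t)) (Y (Suc t)) i'"
    using Suc.prems(3) by (auto simp: lik_def)
  ultimately show ?case by simp
qed

lemma strict_nth_rev:
  assumes "sorted_wrt (<) (xs::nat list)" "i < length xs" "j < length xs" "xs!i < xs!j"
  shows "i < j"
proof (rule ccontr)
  assume "\<not> i < j"
  then have "j = i \<or> j < i" by auto
  then show False
  proof
    assume "j = i" then show False using assms by simp
  next
    assume "j < i" then have "xs!j < xs!i" using assms sorted_wrt_nth_less by blast
    then show False using assms by simp
  qed
qed

lemma strict_nth_le:
  assumes "sorted_wrt (<) (xs::nat list)" "i \<le> j" "j < length xs"
  shows "xs!i \<le> xs!j"
  using assms sorted_wrt_nth_less[OF assms(1), of i j] by (cases "i = j") auto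

lemma Sab_lemma: assumes "\<forall>n\<in>{1..t}. S n \<in> intervals N" "s \<in> {1..t}"
  shows "S s = {Min (S s) .. Max (S s)} \<and> 1 \<le> Min (S s) \<and> Min (S s) \<le> Max (S s) \<and> Max (S s) \<le> N"
proof -
  have "S s \<in> intervals N" using assms by blast
  then obtain a b where ab: "S s = {a..b}" "1 \<le> a" "a \<le> b" "b \<le> N"
    unfolding intervals_def by blast
  have "Min {a..b} = a" using ab by (intro Min_eqI) auto
  moreover have "Max {a..b} = b" using ab by (intro Max_eqI) auto
  ultimately show ?thesis using ab by simp
qed

theorem lemma1:
  fixes N t :: nat and p :: "real \<Rightarrow> real" and S :: "nat \<Rightarrow> nat set" and Y :: "nat \<Rightarrow> bool"
  assumes "N \<ge> 2"
    and "continuous_on {0<..<1} p"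
    and "mono_on {0<..<1} p"
    and "\<forall>x\<in>{0<..<1}. 0 < p x \<and> p x < 1/2"
    and "\<forall>n\<in>{1..t}. S n \<in> intervals N"
  shows "\<exists>k J. k \<le> 2 * t + 1
    \<and> (\<forall>u\<in>{1..k}. J u \<in> intervals N)
    \<and> (\<forall>u\<in>{1..k}. \<forall>v\<in>{1..k}. u \<noteq> v \<longrightarrow> J u \<inter> J v = {})
    \<and> (\<Union>u\<in>{1..k}. J u) = {1..N}
    \<and> (\<forall>i. posterior p N S Y t i =
          (\<Sum>u=1..k. (\<Sum>j\<in>J u. posterior p N S Y t j) / real (card (J u))
                        * indicator (J u) i))"
proof -
  have Sab: "S s = {Min (S s) .. Max (S s)} \<and> 1 \<le> Min (S s) \<and> Min (S s) \<le> Max (S s) \<and> Max (S s) \<le> N"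
    if "s \<in> {1..t}" for s
    using Sab_lemma[OF assms(5) that] .
  define F where "F = {1, N+1} \<union> (\<lambda>s. Min (S s)) ` {1..t} \<union> (\<lambda>s. Max (S s) + 1) ` {1..t}"
  have finF: "finite F" unfolding F_def by simp
  have Fsub: "F \<subseteq> {1..N+1}" unfolding F_def
  proof (intro Un_least)
    show "(\<lambda>s. Min (S s)) ` {1..t} \<subseteq> {1..N+1}" using Sab by force
    show "(\<lambda>s. Max (S s) + 1) ` {1..t} \<subseteq> {1..N+1}" using Sab by force
  qed simp
  have cardF: "card F \<le> 2 * t + 2"
  proof -
    have "card F \<le> card {1, N+1} + card ((\<lambda>s. Min (S s)) ` {1..t}) + card ((\<lambda>s. Max (S s) + 1) ` {1..t})"
      unfolding F_def
      by (rule order_trans[OF card_Un_le add_mono[OF card_Un_le order_refl]])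
    also have "\<dots> \<le> 2 + t + t"
      by (intro add_mono card_image_le[THEN order_trans]) (auto simp: card_insert_le_m1)
    finally show ?thesis by simp
  qed
  obtain xs where xs: "sorted_wrt (<) xs" "set xs = F"
    using ex1_sorted_list_for_set_if_finite[OF finF] by blast
  have dist: "distinct xs" using xs(1) strict_sorted_iff by blast
  have lenF: "length xs = card F" using distinct_card[OF dist] xs(2) by simp
  have "1 \<in> F" "N + 1 \<in> F" unfolding F_def by auto
  then have lpos: "length xs \<ge> 2" using lenF finF \<open>N \<ge> 2\<close>
    
  proof -
    have "{1, N+1} \<subseteq> F" using \<open>1 \<in> F\<close> \<open>N+1 \<in> F\<close> by simp
    then have "card {1, N+1} \<le> card F" using finF card_mono by blast
    then show ?thesis using lenF assms(1) by simp
  qed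
  define k where "k = length xs - 1"
  have kle: "k \<le> 2 * t + 1" using cardF lenF k_def by simp
  have xsin: "xs ! j \<in> {1..N+1}" if "j < length xs" for j using Fsub xs(2) that nth_mem by blast
  have x0: "xs ! 0 = 1"
  proof -
    obtain v where "v < length xs" "xs ! v = 1" using \<open>1 \<in> F\<close> xs(2) by (metis in_set_conv_nth)
    then have "xs ! 0 \<le> 1" using strict_nth_le[OF xs(1), of 0 v] by simp
    moreover have "xs ! 0 \<in> {1..N+1}" by (rule xsin) (use lpos in linarith)
    ultimately show ?thesis by simp
  qed
  have xk: "xs ! k = N + 1"
  proof -
    obtain v where "v < length xs" "xs ! v = N + 1" using \<open>N+1 \<in> F\<close> xs(2) by (metis in_set_conv_nth)
    then have "xs ! k \<ge> N + 1" using strict_nth_le[OF xs(1), of v k] k_def by simp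
    moreover have "xs ! k \<in> {1..N+1}" by (rule xsin) (use lpos k_def in linarith)
    ultimately show ?thesis by simp
  qed
  define J where "J u = {xs ! (u - 1) .. xs ! u - 1}" for u
  have inc: "xs ! (u - 1) < xs ! u" if "u \<in> {1..k}" for u
    using sorted_wrt_nth_less[OF xs(1), of "u - 1" u] that k_def by auto
  have Jint: "J u \<in> intervals N" if "u \<in> {1..k}" for u
  proof -
    have "xs ! (u - 1) \<ge> 1" "xs ! u \<le> N + 1" using xsin[of "u-1"] xsin[of u] that k_def by auto
    then show ?thesis using inc[OF that] unfolding intervals_def J_def
      by (intro CollectI exI[of _ "xs ! (u - 1)"] exI[of _ "xs ! u - 1"]) auto
  qed
  have Jne: "J u \<noteq> {}" if "u \<in> {1..k}" for u
    using inc[OF that] unfolding J_def by auto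
  have Jfin: "finite (J u)" for u unfolding J_def by simp
  have disj: "J u \<inter> J v = {}" if "u \<in> {1..k}" "v \<in> {1..k}" "u < v" for u v
  proof -
    have "xs ! u \<le> xs ! (v - 1)" using strict_nth_le[OF xs(1), of u "v - 1"] that k_def by auto
    then show ?thesis using inc[OF that(1)] unfolding J_def by auto
  qed
  have disj2: "\<forall>u\<in>{1..k}. \<forall>v\<in>{1..k}. u \<noteq> v \<longrightarrow> J u \<inter> J v = {}"
    using disj by (metis inf_commute linorder_neqE_nat)
  have Jsub: "J u \<subseteq> {1..N}" if "u \<in> {1..k}" for u
    using Jint[OF that] unfolding intervals_def by auto
  have cover: "\<exists>u\<in>{1..k}. i \<in> J u" if "i \<in> {1..N}" for i
  proof -
    define u where "u = (LEAST v. i < xs ! v)"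
    have ex: "i < xs ! k" using xk that by simp
    have u1: "i < xs ! u" unfolding u_def using ex by (rule LeastI)
    have u2: "u \<le> k" unfolding u_def using ex by (rule Least_le)
    have "u \<noteq> 0"
    proof
      assume "u = 0"
      then show False using u1 x0 that by simp
    qed
    then have u3: "xs ! (u - 1) \<le> i" using not_less_Least[of "u - 1" "\<lambda>v. i < xs ! v"] u_def by auto
    show ?thesis using u1 u2 u3 \<open>u \<noteq> 0\<close> unfolding J_def by (intro bexI[of _ u]) auto
  qed
  have union: "(\<Union>u\<in>{1..k}. J u) = {1..N}" using Jsub cover by blast
  have homo: "y \<in> S s" if "u \<in> {1..k}" "x \<in> J u" "y \<in> J u" "x \<in> S s" "s \<in> {1..t}" for u x y s
  proof (rule ccontr)
    assume ny: "y \<notin> S s"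
    have lu: "u < length xs" "u - 1 < length xs" using that(1) k_def lpos by auto
    have xr: "xs ! (u - 1) \<le> x" "x < xs ! u" "xs ! (u - 1) \<le> y" "y < xs ! u"
      using that(2,3) inc[OF that(1)] unfolding J_def by auto
    have ab: "Min (S s) \<le> x" "x \<le> Max (S s)" using Sab[OF that(5)] that(4) by auto
    have "y < Min (S s) \<or> Max (S s) < y" using Sab[OF that(5)] ny by auto
    then show False
    proof
      assume A: "y < Min (S s)"
      have "Min (S s) \<in> F" unfolding F_def using that(5) by auto
      then obtain v where v: "v < length xs" "xs ! v = Min (S s)" using xs(2) by (metis in_set_conv_nth)
      have "u - 1 < v" using strict_nth_rev[OF xs(1) lu(2) v(1)] xr A v(2) by simp
      moreover have "v < u" using strict_nth_rev[OF xs(1) v(1) lu(1)] xr ab v(2) by simp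
      ultimately show False by simp
    next
      assume A: "Max (S s) < y"
      have "Max (S s) + 1 \<in> F" unfolding F_def using that(5) by auto
      then obtain v where v: "v < length xs" "xs ! v = Max (S s) + 1" using xs(2) by (metis in_set_conv_nth)
      have "u - 1 < v" using strict_nth_rev[OF xs(1) lu(2) v(1)] xr ab v(2) by simp
      moreover have "v < u" using strict_nth_rev[OF xs(1) v(1) lu(1)] xr A v(2) by simp
      ultimately show False by simp
    qed
  qed
  have pconst: "posterior p N S Y t x = posterior p N S Y t y" if "u \<in> {1..k}" "x \<in> J u" "y \<in> J u" for u x y
    using post_const[of x N y t S p Y] Jsub[OF that(1)] that homo[OF that(1)] by blast
  have formula: "posterior p N S Y t i =
          (\<Sum>u=1..k. (\<Sum>j\<in>J u. posterior p N S Y t j) / real (card (J u)) * indicator (J u) i)" for i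
  proof (cases "\<exists>u\<in>{1..k}. i \<in> J u")
    case True
    then obtain u0 where u0: "u0 \<in> {1..k}" "i \<in> J u0" by blast
    have "(\<Sum>u=1..k. (\<Sum>j\<in>J u. posterior p N S Y t j) / real (card (J u)) * indicator (J u) i)
        = (\<Sum>j\<in>J u0. posterior p N S Y t j) / real (card (J u0)) * indicator (J u0) i"
    proof (rule sum.remove[OF _ u0(1), THEN trans])
      show "finite {1..k}" by simp
      have "(\<Sum>u\<in>{1..k} - {u0}. (\<Sum>j\<in>J u. posterior p N S Y t j) / real (card (J u)) * indicator (J u) i) = 0"
      proof (intro sum.neutral ballI)
        fix x assume x: "x \<in> {1..k} - {u0}"
        then have "i \<notin> J x" using disj2 u0 by blast
        then show "(\<Sum>j\<in>J x. posterior p N S Y t j) / real (card (J x)) * indicator (J x) i = 0" by simp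
      qed
      then show "(\<Sum>j\<in>J u0. posterior p N S Y t j) / real (card (J u0)) * indicator (J u0) i +
          (\<Sum>u\<in>{1..k} - {u0}. (\<Sum>j\<in>J u. posterior p N S Y t j) / real (card (J u)) * indicator (J u) i) =
          (\<Sum>j\<in>J u0. posterior p N S Y t j) / real (card (J u0)) * indicator (J u0) i" by simp
    qed
    also have "(\<Sum>j\<in>J u0. posterior p N S Y t j) = (\<Sum>j\<in>J u0. posterior p N S Y t i)"
      using pconst[OF u0(1) _ u0(2)] by (intro sum.cong) auto
    also have "\<dots> = real (card (J u0)) * posterior p N S Y t i" by simp
    finally show ?thesis using u0 Jne[OF u0(1)] Jfin[of u0] by (simp add: indicator_def)
  next
    case False
    then have "i \<notin> {1..N}" using cover by blast
    then show ?thesis using False by (simp add: post_zero indicator_def)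
  qed
  show ?thesis
    using kle Jint disj2 union formula by blast
qed

end
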